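(* Let $\mathcal{C}$ be a Fraïssé class of finite structures over a finite relational language, and let $M$ be its Fraïssé limit. Assume that every structure in $\mathcal{C}$ is rigid (has trivial automorphism group). Then at least one of the following holds: (a) $M$ has a reduct which is a total order, i.e. there is a strict total order on the domain of $M$ that is definable in $M$ by a first-order formula without parameters; (b) there are structures $A,B\in\mathcal{C}$ with $|A|=2$ which witness that $\mathcal{C}$ is not a Ramsey class, i.e. for every $C\in\mathcal{C}$ there is a colouring of the embeddings $A\to C$ with two colours such that no embedding $g:B\to C$ is monochromatic.
   Context: All structures are non-empty, and classes are closed under isomorphism and hereditary (closed under induced substructures). A Fraïssé class is such a class satisfying the joint embedding property (any two members embed in a common member) and the amalgamation property (for $A,B_1,B_2\in\mathcal{C}$ and embeddings $f_i:A\to B_i$ there exist $C\in\mathcal{C}$ and embeddings $g_i:B_i\to C$ with $g_1\circ f_1=g_2\circ f_2$). Its Fraïssé limit is the unique countable homogeneous structure whose age (class of finite structures embeddable in it) is $\mathcal{C}$; homogeneous means every isomorphism between finite substructures extends to an automorphism. An embedding $g:B\to C$ is monochromatic for a colouring of the embeddings $A\to C$ if all embeddings $A\to C$ whose image is contained in the image of $g$ receive the same colour. $\mathcal{C}$ is a Ramsey class if for all $A,B\in\mathcal{C}$ there is $C\in\mathcal{C}$ such that every $2$-colouring of the embeddings $A\to C$ admits a monochromatic embedding $B\to C$. *)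

theory Defs
  imports Main "HOL-Library.FuncSet" "HOL-Library.Countable_Set"
begin

record ('r, 'a) struc =
  sdom :: "'a set"
  srel :: "'r \<Rightarrow> 'a list \<Rightarrow> bool"

definition wf_struc :: "'r set \<Rightarrow> ('r \<Rightarrow> nat) \<Rightarrow> ('r, 'a) struc \<Rightarrow> bool" where
  "wf_struc L ar A \<longleftrightarrow> sdom A \<noteq> {} \<and>
     (\<forall>r xs. srel A r xs \<longrightarrow> r \<in> L \<and> length xs = ar r \<and> set xs \<subseteq> sdom A)"

definition finite_struc :: "'r set \<Rightarrow> ('r \<Rightarrow> nat) \<Rightarrow> ('r, 'a) struc \<Rightarrow> bool" where
  "finite_struc L ar A \<longleftrightarrow> wf_struc L ar A \<and> finite (sdom A)"

text \<open>Embeddings (as functions on the domain; arbitrary outside).\<close>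
definition is_emb :: "('a \<Rightarrow> 'b) \<Rightarrow> ('r, 'a) struc \<Rightarrow> ('r, 'b) struc \<Rightarrow> bool" where
  "is_emb f A B \<longleftrightarrow> f ` sdom A \<subseteq> sdom B \<and> inj_on f (sdom A) \<and>
     (\<forall>r. \<forall>xs. set xs \<subseteq> sdom A \<longrightarrow> (srel A r xs \<longleftrightarrow> srel B r (map f xs)))"

text \<open>The set of embeddings A \<rightarrow> B, each represented uniquely (extensional functions).\<close>
definition embs :: "('r, 'a) struc \<Rightarrow> ('r, 'b) struc \<Rightarrow> ('a \<Rightarrow> 'b) set" where
  "embs A B = {f. f \<in> extensional (sdom A) \<and> is_emb f A B}"

definition is_iso :: "('a \<Rightarrow> 'b) \<Rightarrow> ('r, 'a) struc \<Rightarrow> ('r, 'b) struc \<Rightarrow> bool" where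
  "is_iso f A B \<longleftrightarrow> is_emb f A B \<and> f ` sdom A = sdom B"

definition is_aut :: "('a \<Rightarrow> 'a) \<Rightarrow> ('r, 'a) struc \<Rightarrow> bool" where
  "is_aut f A \<longleftrightarrow> is_iso f A A"

definition rigid :: "('r, 'a) struc \<Rightarrow> bool" where
  "rigid A \<longleftrightarrow> (\<forall>f. is_aut f A \<longrightarrow> (\<forall>x\<in>sdom A. f x = x))"

definition restr :: "('r, 'a) struc \<Rightarrow> 'a set \<Rightarrow> ('r, 'a) struc" where
  "restr A S = \<lparr>sdom = S, srel = (\<lambda>r xs. srel A r xs \<and> set xs \<subseteq> S)\<rparr>"

text \<open>Classes of finite L-structures are represented by structures with domains in nat
(every finite structure has an isomorphic copy there).\<close>

definition fin_class :: "'r set \<Rightarrow> ('r \<Rightarrow> nat) \<Rightarrow> ('r, nat) struc set \<Rightarrow> bool" where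
  "fin_class L ar K \<longleftrightarrow> K \<noteq> {} \<and> (\<forall>A\<in>K. finite_struc L ar A) \<and>
     (\<forall>A\<in>K. \<forall>B f. finite_struc L ar B \<and> is_iso f A B \<longrightarrow> B \<in> K) \<and>
     (\<forall>A\<in>K. \<forall>S. S \<subseteq> sdom A \<and> S \<noteq> {} \<longrightarrow> restr A S \<in> K)"

definition JEP :: "('r, nat) struc set \<Rightarrow> bool" where
  "JEP K \<longleftrightarrow> (\<forall>A\<in>K. \<forall>B\<in>K. \<exists>C\<in>K. (\<exists>f. is_emb f A C) \<and> (\<exists>g. is_emb g B C))"

definition AP :: "('r, nat) struc set \<Rightarrow> bool" where
  "AP K \<longleftrightarrow> (\<forall>A\<in>K. \<forall>B1\<in>K. \<forall>B2\<in>K. \<forall>f1 f2. is_emb f1 A B1 \<and> is_emb f2 A B2 \<longrightarrow>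
      (\<exists>C\<in>K. \<exists>g1 g2. is_emb g1 B1 C \<and> is_emb g2 B2 C \<and>
         (\<forall>x\<in>sdom A. g1 (f1 x) = g2 (f2 x))))"

definition fraisse_class :: "'r set \<Rightarrow> ('r \<Rightarrow> nat) \<Rightarrow> ('r, nat) struc set \<Rightarrow> bool" where
  "fraisse_class L ar K \<longleftrightarrow> fin_class L ar K \<and> JEP K \<and> AP K"

definition homogeneous :: "('r, 'm) struc \<Rightarrow> bool" where
  "homogeneous M \<longleftrightarrow> (\<forall>S T h. S \<subseteq> sdom M \<and> T \<subseteq> sdom M \<and> finite S \<and>
      is_iso h (restr M S) (restr M T) \<longrightarrow>
      (\<exists>\<sigma>. is_aut \<sigma> M \<and> (\<forall>x\<in>S. \<sigma> x = h x)))"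

definition age_is :: "'r set \<Rightarrow> ('r \<Rightarrow> nat) \<Rightarrow> ('r, 'm) struc \<Rightarrow> ('r, nat) struc set \<Rightarrow> bool" where
  "age_is L ar M K \<longleftrightarrow> (\<forall>A. finite_struc L ar A \<longrightarrow> (A \<in> K \<longleftrightarrow> (\<exists>f. is_emb f A M)))"

definition fraisse_limit :: "'r set \<Rightarrow> ('r \<Rightarrow> nat) \<Rightarrow> ('r, nat) struc set \<Rightarrow> ('r, 'm) struc \<Rightarrow> bool" where
  "fraisse_limit L ar K M \<longleftrightarrow> wf_struc L ar M \<and> countable (sdom M) \<and> homogeneous M \<and> age_is L ar M K"

datatype 'r fm =
    FEq nat nat
  | FRel 'r "nat list"
  | FNeg "'r fm"
  | FConj "'r fm" "'r fm"
  | FEx nat "'r fm"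

fun sat :: "('r, 'a) struc \<Rightarrow> (nat \<Rightarrow> 'a) \<Rightarrow> 'r fm \<Rightarrow> bool" where
  "sat M e (FEq i j) = (e i = e j)"
| "sat M e (FRel r vs) = srel M r (map e vs)"
| "sat M e (FNeg \<phi>) = (\<not> sat M e \<phi>)"
| "sat M e (FConj \<phi> \<psi>) = (sat M e \<phi> \<and> sat M e \<psi>)"
| "sat M e (FEx x \<phi>) = (\<exists>a\<in>sdom M. sat M (e(x := a)) \<phi>)"

fun fv :: "'r fm \<Rightarrow> nat set" where
  "fv (FEq i j) = {i, j}"
| "fv (FRel r vs) = set vs"
| "fv (FNeg \<phi>) = fv \<phi>"
| "fv (FConj \<phi> \<psi>) = fv \<phi> \<union> fv \<psi>"
| "fv (FEx x \<phi>) = fv \<phi> - {x}"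

fun syms :: "'r fm \<Rightarrow> 'r set" where
  "syms (FEq i j) = {}"
| "syms (FRel r vs) = {r}"
| "syms (FNeg \<phi>) = syms \<phi>"
| "syms (FConj \<phi> \<psi>) = syms \<phi> \<union> syms \<psi>"
| "syms (FEx x \<phi>) = syms \<phi>"

definition strict_total_order_on :: "'a set \<Rightarrow> ('a \<Rightarrow> 'a \<Rightarrow> bool) \<Rightarrow> bool" where
  "strict_total_order_on D R \<longleftrightarrow>
     (\<forall>a\<in>D. \<not> R a a) \<and>
     (\<forall>a\<in>D. \<forall>b\<in>D. \<forall>c\<in>D. R a b \<and> R b c \<longrightarrow> R a c) \<and>
     (\<forall>a\<in>D. \<forall>b\<in>D. a \<noteq> b \<longrightarrow> R a b \<or> R b a)"

definition has_definable_total_order :: "'r set \<Rightarrow> ('r, 'm) struc \<Rightarrow> bool" where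
  "has_definable_total_order L M \<longleftrightarrow> (\<exists>\<phi>. fv \<phi> \<subseteq> {0, 1} \<and> syms \<phi> \<subseteq> L \<and>
     strict_total_order_on (sdom M) (\<lambda>a b. sat M (\<lambda>n. if n = 0 then a else b) \<phi>))"

definition monochromatic :: "('b \<Rightarrow> 'c) \<Rightarrow> ('r, 'a) struc \<Rightarrow> ('r, 'b) struc \<Rightarrow> ('r, 'c) struc
    \<Rightarrow> (('a \<Rightarrow> 'c) \<Rightarrow> bool) \<Rightarrow> bool" where
  "monochromatic g A B C \<chi> \<longleftrightarrow> (\<forall>f1\<in>embs A C. \<forall>f2\<in>embs A C.
      f1 ` sdom A \<subseteq> g ` sdom B \<and> f2 ` sdom A \<subseteq> g ` sdom B \<longrightarrow> \<chi> f1 = \<chi> f2)"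

definition not_ramsey_witness :: "('r, nat) struc set \<Rightarrow> ('r, nat) struc \<Rightarrow> ('r, nat) struc \<Rightarrow> bool" where
  "not_ramsey_witness K A B \<longleftrightarrow> (\<forall>C\<in>K. \<exists>\<chi> :: (nat \<Rightarrow> nat) \<Rightarrow> bool.
      \<forall>g. is_emb g B C \<longrightarrow> \<not> monochromatic g A B C \<chi>)"

end

theory Submission
  imports Defs
begin

definition pa2 :: "'a \<Rightarrow> 'a \<Rightarrow> nat \<Rightarrow> 'a" where
  "pa2 a b = (\<lambda>n. if n = 0 then a else b)"

definition tI :: "'r set \<Rightarrow> ('r \<Rightarrow> nat) \<Rightarrow> ('r \<times> nat list) set" where
  "tI L ar = {(r, xs). r \<in> L \<and> length xs = ar r \<and> set xs \<subseteq> {0,1}}"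

lemma finite_tI: "finite L \<Longrightarrow> finite (tI L ar)"
proof -
  assume L: "finite L"
  have "tI L ar \<subseteq> (\<Union>r\<in>L. {r} \<times> {xs. set xs \<subseteq> {0,1} \<and> length xs = ar r})"
    unfolding tI_def by auto
  moreover have "finite (\<Union>r\<in>L. {r} \<times> {xs. set xs \<subseteq> {0::nat,1} \<and> length xs = ar r})"
    using L by (intro finite_UN_I) (auto intro: finite_lists_length_eq)
  ultimately show ?thesis by (rule finite_subset)
qed

definition tkey :: "('r, 'm) struc \<Rightarrow> 'r set \<Rightarrow> ('r \<Rightarrow> nat) \<Rightarrow> 'm \<Rightarrow> 'm \<Rightarrow> bool \<times> ('r \<times> nat list) set" where
  "tkey M L ar a b = (a = b, {x \<in> tI L ar. srel M (fst x) (map (pa2 a b) (snd x))})"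

lemma tkey_eqD:
  assumes "tkey M L ar a b = tkey M L ar c d" "(r, xs) \<in> tI L ar"
  shows "srel M r (map (pa2 a b) xs) = srel M r (map (pa2 c d) xs)"
proof -
  from assms(1) have "{x \<in> tI L ar. srel M (fst x) (map (pa2 a b) (snd x))} =
     {x \<in> tI L ar. srel M (fst x) (map (pa2 c d) (snd x))}" unfolding tkey_def by simp
  then show ?thesis using assms(2) by (metis (no_types, lifting) fst_conv mem_Collect_eq snd_conv)
qed

definition pull :: "('r, 'm) struc \<Rightarrow> (nat \<Rightarrow> 'm) \<Rightarrow> nat \<Rightarrow> ('r, nat) struc" where
  "pull M e n = \<lparr>sdom = {0..<n}, srel = (\<lambda>r xs. set xs \<subseteq> {0..<n} \<and> srel M r (map e xs))\<rparr>"

lemma pull_in_K: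
  assumes "age_is L ar M K" "wf_struc L ar M" "n > 0" "inj_on e {0..<n}" "e ` {0..<n} \<subseteq> sdom M"
  shows "pull M e n \<in> K" "is_emb e (pull M e n) M"
proof -
  show em: "is_emb e (pull M e n) M"
    using assms unfolding is_emb_def pull_def by auto
  have "finite_struc L ar (pull M e n)"
    using assms(2,3) unfolding finite_struc_def wf_struc_def pull_def by (auto, metis length_map)
  then show "pull M e n \<in> K" using assms(1) em unfolding age_is_def by blast
qed

lemma pull_emb:
  assumes "wf_struc L ar M" "f ` {0..<m} \<subseteq> {0..<n}" "inj_on f {0..<m}"
    "\<And>r xs. r \<in> L \<Longrightarrow> length xs = ar r \<Longrightarrow> set xs \<subseteq> {0..<m} \<Longrightarrow>
        srel M r (map e1 xs) = srel M r (map (e2 \<circ> f) xs)"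
  shows "is_emb f (pull M e1 m) (pull M e2 n)"
  unfolding is_emb_def
proof (intro conjI allI impI)
  fix r xs assume xs: "set xs \<subseteq> sdom (pull M e1 m)"
  then have xs': "set xs \<subseteq> {0..<m}" by (simp add: pull_def)
  then have fx: "set (map f xs) \<subseteq> {0..<n}" using assms(2) by auto
  show "srel (pull M e1 m) r xs = srel (pull M e2 n) r (map f xs)"
  proof (cases "r \<in> L \<and> length xs = ar r")
    case True
    then show ?thesis using assms(4)[of r xs] xs' fx by (simp add: pull_def)
  next
    case False
    then have "\<not> srel M r (map e1 xs)" "\<not> srel M r (map e2 (map f xs))"
      using assms(1) unfolding wf_struc_def by (metis length_map)+
    then show ?thesis by (simp add: pull_def)
  qed
qed (use assms in \<open>auto simp: pull_def\<close>)

lemma emb_comp: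
  assumes "is_emb g B C" "is_emb h A B"
  shows "is_emb (g \<circ> h) A C"
proof -
  have hA: "h ` sdom A \<subseteq> sdom B" and gB: "g ` sdom B \<subseteq> sdom C"
    using assms unfolding is_emb_def by auto
  have "inj_on (g \<circ> h) (sdom A)"
    using assms hA unfolding is_emb_def by (metis comp_inj_on inj_on_subset)
  moreover have "\<forall>r xs. set xs \<subseteq> sdom A \<longrightarrow> (srel A r xs \<longleftrightarrow> srel C r (map (g \<circ> h) xs))"
  proof (intro allI impI)
    fix r xs assume xs: "set xs \<subseteq> sdom A"
    then have "set (map h xs) \<subseteq> sdom B" using hA by auto
    then show "srel A r xs \<longleftrightarrow> srel C r (map (g \<circ> h) xs)"
      using assms xs unfolding is_emb_def by (metis map_map)
  qed
  ultimately show ?thesis using hA gB unfolding is_emb_def by (auto simp: image_subset_iff)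
qed

lemma emb_cong:
  assumes "is_emb f A B" "\<And>x. x \<in> sdom A \<Longrightarrow> f x = f' x"
  shows "is_emb f' A B"
proof -
  have m: "\<And>xs. set xs \<subseteq> sdom A \<Longrightarrow> map f xs = map f' xs" using assms(2) by auto
  have "f ` sdom A = f' ` sdom A" using assms(2) by (rule image_cong[OF refl])
  moreover have "inj_on f (sdom A) = inj_on f' (sdom A)" using assms(2) by (rule inj_on_cong)
  ultimately show ?thesis using assms(1) m unfolding is_emb_def by metis
qed

lemma emb_restrict: "is_emb f A B \<Longrightarrow> restrict f (sdom A) \<in> embs A B"
  unfolding embs_def using emb_cong[of f A B "restrict f (sdom A)"] by auto

definition sto_aux where "sto_aux = strict_total_order_on"

lemma sto_mono: "strict_total_order_on D R \<Longrightarrow> F \<subseteq> D \<Longrightarrow> strict_total_order_on F R"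
  unfolding strict_total_order_on_def by blast

lemma sto_fin:
  assumes "\<not> strict_total_order_on D R"
  shows "\<exists>F\<subseteq>D. finite F \<and> F \<noteq> {} \<and> \<not> strict_total_order_on F R"
proof -
  from assms obtain a b c where "a \<in> D" "b \<in> D" "c \<in> D"
    "\<not> strict_total_order_on {a,b,c} R"
    unfolding strict_total_order_on_def by blast
  then show ?thesis by (intro exI[of _ "{a,b,c}"]) auto
qed

lemma chain:
  assumes RAM: "\<forall>A\<in>K. \<forall>B\<in>K. card (sdom A) = 2 \<longrightarrow>
        (\<exists>C\<in>K. \<forall>\<chi>. \<exists>g. is_emb g B C \<and> monochromatic g A B C \<chi>)"
    and fin: "\<forall>A\<in>K. finite_struc L ar A"
    and B: "B \<in> K"
  shows "set As \<subseteq> K \<Longrightarrow> \<forall>A\<in>set As. card (sdom A) = 2 \<Longrightarrow>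
    \<exists>C\<in>K. \<forall>ord::nat\<Rightarrow>nat\<Rightarrow>bool. \<exists>h. is_emb h B C \<and>
      (\<forall>A\<in>set As. \<forall>f1\<in>embs A B. \<forall>f2\<in>embs A B.
          ord (h (f1 (Min (sdom A)))) (h (f1 (Max (sdom A)))) =
          ord (h (f2 (Min (sdom A)))) (h (f2 (Max (sdom A)))))"
proof (induction As)
  case Nil
  have "is_emb id B B" unfolding is_emb_def by auto
  then show ?case using B by auto
next
  case (Cons A As)
  then obtain C' where C': "C' \<in> K" and IH: "\<forall>ord::nat\<Rightarrow>nat\<Rightarrow>bool. \<exists>h. is_emb h B C' \<and>
      (\<forall>A\<in>set As. \<forall>f1\<in>embs A B. \<forall>f2\<in>embs A B.
          ord (h (f1 (Min (sdom A)))) (h (f1 (Max (sdom A)))) =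
          ord (h (f2 (Min (sdom A)))) (h (f2 (Max (sdom A)))))" by auto
  have AK: "A \<in> K" "card (sdom A) = 2" using Cons.prems by auto
  then obtain C where C: "C \<in> K" and R: "\<forall>\<chi>. \<exists>g. is_emb g C' C \<and> monochromatic g A C' C \<chi>"
    using RAM C' by blast
  have finA: "finite (sdom A)" "sdom A \<noteq> {}" using fin AK unfolding finite_struc_def wf_struc_def by auto
  have "\<forall>ord::nat\<Rightarrow>nat\<Rightarrow>bool. \<exists>h. is_emb h B C \<and>
      (\<forall>A\<in>set (A # As). \<forall>f1\<in>embs A B. \<forall>f2\<in>embs A B.
          ord (h (f1 (Min (sdom A)))) (h (f1 (Max (sdom A)))) =
          ord (h (f2 (Min (sdom A)))) (h (f2 (Max (sdom A)))))"
  proof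
    fix ord :: "nat\<Rightarrow>nat\<Rightarrow>bool"
    define m0 where "m0 = Min (sdom A)"
    define m1 where "m1 = Max (sdom A)"
    have m: "m0 \<in> sdom A" "m1 \<in> sdom A" using finA unfolding m0_def m1_def by auto
    obtain g where g: "is_emb g C' C" and mono: "monochromatic g A C' C (\<lambda>f. ord (f m0) (f m1))"
      using R by blast
    obtain h' where h': "is_emb h' B C'" and inv: "\<forall>A\<in>set As. \<forall>f1\<in>embs A B. \<forall>f2\<in>embs A B.
          ord (g (h' (f1 (Min (sdom A))))) (g (h' (f1 (Max (sdom A))))) =
          ord (g (h' (f2 (Min (sdom A))))) (g (h' (f2 (Max (sdom A)))))"
      using IH[rule_format, of "\<lambda>x y. ord (g x) (g y)"] by blast
    have key: "ord (g (h' (f1 m0))) (g (h' (f1 m1))) = ord (g (h' (f2 m0))) (g (h' (f2 m1)))"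
      if f1: "f1 \<in> embs A B" and f2: "f2 \<in> embs A B" for f1 f2
    proof -
      have e1: "is_emb f1 A B" and e2: "is_emb f2 A B" using f1 f2 unfolding embs_def by auto
      have c1: "is_emb (g \<circ> h' \<circ> f1) A C" using emb_comp[OF emb_comp[OF g h'] e1] .
      have c2: "is_emb (g \<circ> h' \<circ> f2) A C" using emb_comp[OF emb_comp[OF g h'] e2] .
      have i1: "restrict (g \<circ> h' \<circ> f1) (sdom A) ` sdom A \<subseteq> g ` sdom C'"
        using e1 h' unfolding is_emb_def by auto
      have i2: "restrict (g \<circ> h' \<circ> f2) (sdom A) ` sdom A \<subseteq> g ` sdom C'"
        using e2 h' unfolding is_emb_def by auto
      have "(\<lambda>f. ord (f m0) (f m1)) (restrict (g \<circ> h' \<circ> f1) (sdom A)) =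
            (\<lambda>f. ord (f m0) (f m1)) (restrict (g \<circ> h' \<circ> f2) (sdom A))"
        using mono emb_restrict[OF c1] emb_restrict[OF c2] i1 i2 unfolding monochromatic_def by blast
      then show ?thesis using m by simp
    qed
    show "\<exists>h. is_emb h B C \<and>
      (\<forall>A\<in>set (A # As). \<forall>f1\<in>embs A B. \<forall>f2\<in>embs A B.
          ord (h (f1 (Min (sdom A)))) (h (f1 (Max (sdom A)))) =
          ord (h (f2 (Min (sdom A)))) (h (f2 (Max (sdom A)))))"
    proof (intro exI[of _ "g \<circ> h'"] conjI ballI)
      show "is_emb (g \<circ> h') B C" using emb_comp[OF g h'] .
      fix A2 f1 f2 assume A2: "A2 \<in> set (A # As)" and f: "f1 \<in> embs A2 B" "f2 \<in> embs A2 B"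
      show "ord ((g \<circ> h') (f1 (Min (sdom A2)))) ((g \<circ> h') (f1 (Max (sdom A2)))) =
          ord ((g \<circ> h') (f2 (Min (sdom A2)))) ((g \<circ> h') (f2 (Max (sdom A2))))"
      proof (cases "A2 = A")
        case True
        then show ?thesis using key[of f1 f2] f unfolding m0_def m1_def by simp
      next
        case False
        then have "A2 \<in> set As" using A2 by simp
        from inv[rule_format, OF this f(1) f(2)] show ?thesis by (simp only: comp_apply)
      qed
    qed
  qed
  then show ?case using C by blast
qed


fun conjs :: "'r fm list \<Rightarrow> 'r fm" where
  "conjs [] = FEq 0 0"
| "conjs (\<phi> # \<phi>s) = FConj \<phi> (conjs \<phi>s)"

fun disjs :: "'r fm list \<Rightarrow> 'r fm" where
  "disjs [] = FNeg (FEq 0 0)"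
| "disjs (\<phi> # \<phi>s) = FNeg (FConj (FNeg \<phi>) (FNeg (disjs \<phi>s)))"

definition lit :: "'r fm \<Rightarrow> bool \<Rightarrow> 'r fm" where
  "lit \<phi> b = (if b then \<phi> else FNeg \<phi>)"

lemma sat_lit[simp]: "sat M e (lit \<phi> b) = (sat M e \<phi> = b)"
  by (simp add: lit_def)
lemma fv_lit[simp]: "fv (lit \<phi> b) = fv \<phi>" by (simp add: lit_def)
lemma syms_lit[simp]: "syms (lit \<phi> b) = syms \<phi>" by (simp add: lit_def)

lemma sat_conjs[simp]: "sat M e (conjs fs) = (\<forall>\<phi>\<in>set fs. sat M e \<phi>)"
  by (induct fs) auto
lemma sat_disjs[simp]: "sat M e (disjs fs) = (\<exists>\<phi>\<in>set fs. sat M e \<phi>)"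
  by (induct fs) auto
lemma fv_conjs: "(\<forall>\<phi>\<in>set fs. fv \<phi> \<subseteq> {0,1}) \<Longrightarrow> fv (conjs fs) \<subseteq> {0,1}"
  by (induct fs) auto
lemma fv_disjs: "(\<forall>\<phi>\<in>set fs. fv \<phi> \<subseteq> {0,1}) \<Longrightarrow> fv (disjs fs) \<subseteq> {0,1}"
  by (induct fs) auto
lemma syms_conjs: "(\<forall>\<phi>\<in>set fs. syms \<phi> \<subseteq> L) \<Longrightarrow> syms (conjs fs) \<subseteq> L"
  by (induct fs) auto
lemma syms_disjs: "(\<forall>\<phi>\<in>set fs. syms \<phi> \<subseteq> L) \<Longrightarrow> syms (disjs fs) \<subseteq> L"
  by (induct fs) auto

definition tyfm :: "('r, 'm) struc \<Rightarrow> ('r \<times> nat list) list \<Rightarrow> 'm \<Rightarrow> 'm \<Rightarrow> 'r fm" where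
  "tyfm M Il c d = FConj (lit (FEq 0 1) (c = d))
     (conjs (map (\<lambda>x. lit (FRel (fst x) (snd x)) (srel M (fst x) (map (pa2 c d) (snd x)))) Il))"

lemma tyfm_sat:
  assumes "set Il = tI L ar"
  shows "sat M (pa2 a b) (tyfm M Il c d) = (tkey M L ar a b = tkey M L ar c d)"
proof -
  have "sat M (pa2 a b) (tyfm M Il c d) = ((a = b) = (c = d) \<and>
     (\<forall>x\<in>tI L ar. srel M (fst x) (map (pa2 a b) (snd x)) = srel M (fst x) (map (pa2 c d) (snd x))))"
    unfolding tyfm_def using assms by (auto simp: pa2_def)
  also have "\<dots> = (tkey M L ar a b = tkey M L ar c d)"
    unfolding tkey_def by auto
  finally show ?thesis .
qed

lemma tyfm_fv_syms:
  assumes "set Il = tI L ar"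
  shows "fv (tyfm M Il c d) \<subseteq> {0,1}" "syms (tyfm M Il c d) \<subseteq> L"
proof -
  let ?l = "map (\<lambda>x. lit (FRel (fst x) (snd x)) (srel M (fst x) (map (pa2 c d) (snd x)))) Il"
  have "\<forall>\<phi>\<in>set ?l. fv \<phi> \<subseteq> {0,1}" using assms by (auto simp: tI_def)
  then have "fv (conjs ?l) \<subseteq> {0,1}" by (rule fv_conjs)
  then show "fv (tyfm M Il c d) \<subseteq> {0,1}" unfolding tyfm_def by (simp add: lit_def)
  have "\<forall>\<phi>\<in>set ?l. syms \<phi> \<subseteq> L" using assms by (auto simp: tI_def)
  then have "syms (conjs ?l) \<subseteq> L" by (rule syms_conjs)
  then show "syms (tyfm M Il c d) \<subseteq> L" unfolding tyfm_def by (simp add: lit_def)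
qed

lemma definable:
  assumes "set Il = tI L ar" "finite S"
  shows "\<exists>\<phi>. fv \<phi> \<subseteq> {0,1} \<and> syms \<phi> \<subseteq> L \<and>
     (\<forall>a b. sat M (pa2 a b) \<phi> = (\<exists>p\<in>S. tkey M L ar a b = tkey M L ar (fst p) (snd p)))"
proof -
  obtain Sl where Sl: "set Sl = S" using finite_list[OF assms(2)] by blast
  let ?l = "map (\<lambda>p. tyfm M Il (fst p) (snd p)) Sl"
  have "\<forall>\<phi>\<in>set ?l. fv \<phi> \<subseteq> {0,1}"
  proof
    fix \<phi> assume "\<phi> \<in> set ?l"
    then obtain p where "\<phi> = tyfm M Il (fst p) (snd p)" by auto
    then show "fv \<phi> \<subseteq> {0,1}" using tyfm_fv_syms(1)[OF assms(1), of M "fst p" "snd p"] by (simp only:)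
  qed
  then have 1: "fv (disjs ?l) \<subseteq> {0,1}" by (rule fv_disjs)
  have "\<forall>\<phi>\<in>set ?l. syms \<phi> \<subseteq> L"
  proof
    fix \<phi> assume "\<phi> \<in> set ?l"
    then obtain p where "\<phi> = tyfm M Il (fst p) (snd p)" by auto
    then show "syms \<phi> \<subseteq> L" using tyfm_fv_syms(2)[OF assms(1), of M "fst p" "snd p"] by (simp only:)
  qed
  then have 2: "syms (disjs ?l) \<subseteq> L" by (rule syms_disjs)
  have 3: "\<forall>a b. sat M (pa2 a b) (disjs ?l) = (\<exists>p\<in>S. tkey M L ar a b = tkey M L ar (fst p) (snd p))"
  proof (intro allI)
    fix a b
    have "sat M (pa2 a b) (disjs ?l) = (\<exists>p\<in>set Sl. sat M (pa2 a b) (tyfm M Il (fst p) (snd p)))" by simp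
    also have "\<dots> = (\<exists>p\<in>S. tkey M L ar a b = tkey M L ar (fst p) (snd p))"
      unfolding Sl[symmetric] by (simp only: tyfm_sat[OF assms(1)])
    finally show "sat M (pa2 a b) (disjs ?l) = (\<exists>p\<in>S. tkey M L ar a b = tkey M L ar (fst p) (snd p))" .
  qed
  show ?thesis using 1 2 3 by blast
qed


lemma emb_pair:
  assumes wfM: "wf_struc L ar M" and ij: "i < n" "j < n" "i \<noteq> j"
    and k: "tkey M L ar c d = tkey M L ar (e i) (e j)"
  shows "restrict (pa2 i j) {0..<2} \<in> embs (pull M (pa2 c d) 2) (pull M e n)"
proof -
  have two: "{0..<2::nat} = {0,1}" by auto
  have "is_emb (restrict (pa2 i j) {0..<2}) (pull M (pa2 c d) 2) (pull M e n)"
  proof (rule pull_emb[OF wfM])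
    show "restrict (pa2 i j) {0..<2} ` {0..<2} \<subseteq> {0..<n}" using ij by (auto simp: two pa2_def)
    show "inj_on (restrict (pa2 i j) {0..<2}) {0..<2}" using ij by (auto simp: two pa2_def inj_on_def)
    fix r and xs :: "nat list" assume r: "r \<in> L" "length xs = ar r" "set xs \<subseteq> {0..<2}"
    have "map (e \<circ> restrict (pa2 i j) {0..<2}) xs = map (pa2 (e i) (e j)) xs"
      using r(3) by (intro map_cong refl) (auto simp: pa2_def)
    then have m: "map (e \<circ> restrict (pa2 i j) {0..<2}) xs = map (pa2 (e i) (e j)) xs" .
    have "(r, xs) \<in> tI L ar" using r by (auto simp: tI_def)
    then have t: "srel M r (map (pa2 c d) xs) = srel M r (map (pa2 (e i) (e j)) xs)"
      by (rule tkey_eqD[OF k])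
    show "srel M r (map (pa2 c d) xs) = srel M r (map (e \<circ> restrict (pa2 i j) {0..<2}) xs)"
      unfolding m by (rule t)
  qed
  then show ?thesis unfolding embs_def pull_def by simp
qed

theorem theorem1p5:
  fixes L :: "'r set" and ar :: "'r \<Rightarrow> nat"
    and K :: "('r, nat) struc set" and M :: "('r, 'm) struc"
  assumes "finite L"
    and "fraisse_class L ar K"
    and "fraisse_limit L ar K M"
    and "\<forall>A\<in>K. rigid A"
  shows "has_definable_total_order L M \<or>
         (\<exists>A\<in>K. \<exists>B\<in>K. card (sdom A) = 2 \<and> not_ramsey_witness K A B)"
proof -
  from assms(3) have wfM: "wf_struc L ar M" and age: "age_is L ar M K"
    unfolding fraisse_limit_def by auto
  have finK: "\<forall>A\<in>K. finite_struc L ar A"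
    using assms(2) unfolding fraisse_class_def fin_class_def by auto
  show ?thesis
  proof (rule ccontr)
    assume "\<not> ?thesis"
    then have nodef: "\<not> has_definable_total_order L M"
      and RAM0: "\<not> (\<exists>A\<in>K. \<exists>B\<in>K. card (sdom A) = 2 \<and> not_ramsey_witness K A B)" by auto
    from RAM0 have RAM: "\<forall>A\<in>K. \<forall>B\<in>K. card (sdom A) = 2 \<longrightarrow>
        (\<exists>C\<in>K. \<forall>\<chi>. \<exists>g. is_emb g B C \<and> monochromatic g A B C \<chi>)"
      unfolding not_ramsey_witness_def by blast
    define D where "D = sdom M"
    define key where "key = tkey M L ar"
    define kf where "kf = (\<lambda>p. key (fst p) (snd p))"
    define P where "P = D \<times> D"
    have finI: "finite (tI L ar)" by (rule finite_tI[OF assms(1)])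
    have "kf ` P \<subseteq> UNIV \<times> Pow (tI L ar)" unfolding kf_def key_def tkey_def by auto
    moreover have "finite (UNIV \<times> Pow (tI L ar) :: (bool \<times> _) set)" using finI by simp
    ultimately have finKeys: "finite (kf ` P)" by (rule finite_subset)
    define rep where "rep = (\<lambda>p. inv_into P kf (kf p))"
    define Reps where "Reps = rep ` P"
    have "Reps = inv_into P kf ` (kf ` P)" unfolding Reps_def rep_def image_image by simp
    then have finReps: "finite Reps" using finKeys by simp
    have repP: "rep p \<in> P" if "p \<in> P" for p using that by (simp add: rep_def inv_into_into)
    have repk: "kf (rep p) = kf p" if "p \<in> P" for p using that by (simp add: rep_def f_inv_into_f)
    have RepsP: "Reps \<subseteq> P" using repP Reps_def by auto
    obtain Il where Il: "set Il = tI L ar" using finite_list[OF finI] by blast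
    define RS where "RS = (\<lambda>S a b. \<exists>p\<in>S. key a b = kf p)"
    have nsto: "\<not> strict_total_order_on D (RS S)" if SR: "S \<subseteq> Reps" for S
    proof
      assume sto: "strict_total_order_on D (RS S)"
      have "finite S" using finReps SR finite_subset by blast
      from definable[OF Il this, of M] obtain \<phi> where \<phi>: "fv \<phi> \<subseteq> {0,1}" "syms \<phi> \<subseteq> L"
        "\<forall>a b. sat M (pa2 a b) \<phi> = (\<exists>p\<in>S. tkey M L ar a b = tkey M L ar (fst p) (snd p))" by blast
      have eq: "(\<lambda>a b. sat M (\<lambda>n. if n = 0 then a else b) \<phi>) = RS S"
      proof (intro ext)
        fix a b
        have "sat M (\<lambda>n. if n = 0 then a else b) \<phi> = sat M (pa2 a b) \<phi>" by (simp add: pa2_def)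
        also have "\<dots> = RS S a b" using \<phi>(3) unfolding RS_def kf_def key_def by simp
        finally show "sat M (\<lambda>n. if n = 0 then a else b) \<phi> = RS S a b" .
      qed
      have "has_definable_total_order L M"
        unfolding has_definable_total_order_def
        using \<phi>(1,2) sto eq D_def by metis
      then show False using nodef by simp
    qed
    have "\<forall>S\<in>Pow Reps. \<exists>F. F \<subseteq> D \<and> finite F \<and> F \<noteq> {} \<and> \<not> strict_total_order_on F (RS S)"
      using nsto sto_fin by blast
    then obtain wit where wit: "\<forall>S\<in>Pow Reps. wit S \<subseteq> D \<and> finite (wit S) \<and> wit S \<noteq> {} \<and>
        \<not> strict_total_order_on (wit S) (RS S)"
      by metis
    define W where "W = \<Union>(wit ` Pow Reps)"
    have WD: "W \<subseteq> D" using wit W_def by auto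
    have finW: "finite W" using wit finReps W_def by auto
    have Wne: "W \<noteq> {}" using wit W_def by blast
    have Wn: "\<not> strict_total_order_on W (RS S)" if "S \<subseteq> Reps" for S
      using that wit sto_mono W_def by (metis PowI UN_upper image_eqI)
    define n where "n = card W"
    obtain e where e: "bij_betw e {0..<n} W" using ex_bij_betw_nat_finite[OF finW] n_def by auto
    have n0: "n > 0" using finW Wne n_def by (simp add: card_gt_0_iff)
    have einj: "inj_on e {0..<n}" and eW: "e ` {0..<n} = W" using e unfolding bij_betw_def by auto
    define B0 where "B0 = pull M e n"
    have B0K: "B0 \<in> K" using pull_in_K[OF age wfM n0 einj] eW WD D_def B0_def by auto
    define DR where "DR = {p\<in>Reps. fst p \<noteq> snd p}"
    have "finite DR" using finReps DR_def by auto
    then obtain Rl where Rl: "set Rl = DR" using finite_list by blast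
    define Ap where "Ap = (\<lambda>p. pull M (pa2 (fst p) (snd p)) 2)"
    define As where "As = map Ap Rl"
    have ApK: "Ap p \<in> K" if "p \<in> DR" for p
    proof -
      have "p \<in> P" "fst p \<noteq> snd p" using that RepsP DR_def by auto
      then have "inj_on (pa2 (fst p) (snd p)) {0..<2}" "pa2 (fst p) (snd p) ` {0..<2} \<subseteq> sdom M"
        by (auto simp: inj_on_def pa2_def P_def D_def mem_Times_iff)
      then show ?thesis using pull_in_K[OF age wfM, of 2] Ap_def by auto
    qed
    have AsK: "set As \<subseteq> K" using ApK Rl As_def by auto
    have As2: "\<forall>A\<in>set As. card (sdom A) = 2" using As_def Ap_def by (auto simp: pull_def)
    from chain[OF RAM finK B0K AsK As2] obtain C where "C \<in> K" and CC: "\<forall>ord::nat\<Rightarrow>nat\<Rightarrow>bool. \<exists>h. is_emb h B0 C \<and>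
      (\<forall>A\<in>set As. \<forall>f1\<in>embs A B0. \<forall>f2\<in>embs A B0.
          ord (h (f1 (Min (sdom A)))) (h (f1 (Max (sdom A)))) =
          ord (h (f2 (Min (sdom A)))) (h (f2 (Max (sdom A)))))" by blast
    from CC[rule_format, of "(<)"] obtain h where h: "is_emb h B0 C" and inv: "\<forall>A\<in>set As. \<forall>f1\<in>embs A B0. \<forall>f2\<in>embs A B0.
          (h (f1 (Min (sdom A)))) < (h (f1 (Max (sdom A)))) =
          ((h (f2 (Min (sdom A)))) < (h (f2 (Max (sdom A)))))" by blast
    have hinj: "inj_on h {0..<n}" using h unfolding is_emb_def B0_def pull_def by simp
    define S where "S = {p\<in>Reps. \<exists>i<n. \<exists>j<n. kf p = key (e i) (e j) \<and> h i < h j}"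
    have SR: "S \<subseteq> Reps" using S_def by auto
    have eP: "(e i, e j) \<in> P" if "i < n" "j < n" for i j
      using that eW WD unfolding P_def by auto
    have claim: "RS S (e i') (e j') = (h i' < h j')" if ij': "i' < n" "j' < n" for i' j'
    proof
      assume "RS S (e i') (e j')"
      then obtain p i j where p: "p \<in> Reps" "i<n" "j<n" "kf p = key (e i) (e j)" "h i < h j"
        "key (e i') (e j') = kf p" unfolding RS_def S_def by auto
      then have kk: "key (e i') (e j') = key (e i) (e j)" by simp
      have "i \<noteq> j" using p(5) by auto
      then have "e i \<noteq> e j" using einj p(2,3) by (meson atLeastLessThan_iff inj_onD zero_le)
      then have "e i' \<noteq> e j'" using kk unfolding key_def tkey_def by auto
      then have "i' \<noteq> j'" by auto
      define q where "q = rep (e i, e j)"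
      have qR: "q \<in> Reps" using eP[OF p(2,3)] Reps_def q_def by auto
      have qk: "kf q = key (e i) (e j)" using repk[OF eP[OF p(2,3)]] q_def kf_def by simp
      have "fst q \<noteq> snd q" using qk \<open>e i \<noteq> e j\<close> unfolding kf_def key_def tkey_def by auto
      then have "q \<in> DR" using qR DR_def by auto
      then have "Ap q \<in> set As" using Rl As_def by auto
      have k1: "tkey M L ar (fst q) (snd q) = tkey M L ar (e i) (e j)" using qk kf_def key_def by simp
      have k2: "tkey M L ar (fst q) (snd q) = tkey M L ar (e i') (e j')" using qk kk kf_def key_def by simp
      have f1: "restrict (pa2 i j) {0..<2} \<in> embs (Ap q) B0"
        using emb_pair[OF wfM p(2,3) \<open>i \<noteq> j\<close> k1] Ap_def B0_def by simp
      have f2: "restrict (pa2 i' j') {0..<2} \<in> embs (Ap q) B0"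
        using emb_pair[OF wfM ij' \<open>i' \<noteq> j'\<close> k2] Ap_def B0_def by simp
      have two: "{0..<2::nat} = {0,1}" by auto
      have mm: "Min (sdom (Ap q)) = 0" "Max (sdom (Ap q)) = 1" unfolding Ap_def pull_def
        by (simp_all only: struc.simps two, simp_all)
      have "(h i < h j) = (h i' < h j')"
        using inv[rule_format, OF \<open>Ap q \<in> set As\<close> f1 f2] unfolding mm by (simp add: pa2_def)
      then show "h i' < h j'" using p(5) by simp
    next
      assume hl: "h i' < h j'"
      define q where "q = rep (e i', e j')"
      have qR: "q \<in> Reps" using eP[OF ij'] Reps_def q_def by auto
      have qk: "kf q = key (e i') (e j')" using repk[OF eP[OF ij']] q_def kf_def by simp
      have "q \<in> S" using qR qk ij' hl S_def by auto
      then show "RS S (e i') (e j')" using qk unfolding RS_def by metis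
    qed
    have "strict_total_order_on W (RS S)"
      unfolding strict_total_order_on_def eW[symmetric]
    proof (intro conjI ballI impI)
      fix a assume "a \<in> e ` {0..<n}"
      then obtain i where "i < n" "a = e i" by auto
      then show "\<not> RS S a a" using claim by simp
    next
      fix a b c assume "a \<in> e ` {0..<n}" "b \<in> e ` {0..<n}" "c \<in> e ` {0..<n}" "RS S a b \<and> RS S b c"
      then obtain i j k where "i < n" "a = e i" "j < n" "b = e j" "k < n" "c = e k" "RS S a b" "RS S b c" by auto
      then show "RS S a c" using claim by auto
    next
      fix a b assume "a \<in> e ` {0..<n}" "b \<in> e ` {0..<n}" "a \<noteq> b"
      then obtain i j where ij: "i < n" "a = e i" "j < n" "b = e j" "i \<noteq> j" by (metis imageE atLeastLessThan_iff)
      then have "h i \<noteq> h j" using hinj by (meson atLeastLessThan_iff inj_onD zero_le)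
      then show "RS S a b \<or> RS S b a" using claim ij by auto
    qed
    then show False using Wn[OF SR] by simp
  qed
qed

end
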